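(* For each $k\in\mathbb{N}$, the set $\mathcal{A}_k=\{K\in\mathcal{K}^2_*: \mathrm{conv}\,\mathcal{M}_K \text{ has at most } k \text{ exposed points}\}$ is closed in $\mathcal{K}^2_*$.
   Context: $\mathcal{K}^2_*$ is the set of strictly convex bodies (nonempty compact convex subsets of $\mathbb{R}^2$ whose boundary contains no nondegenerate segment), with the Hausdorff metric. For $K\in\mathcal{K}^2_*$ and $u\in\mathbb{S}^1$, $x_K(u)$ is the unique point of $K$ on its supporting line with outer unit normal $u$, $m_K(u)=\frac12[x_K(u)+x_K(-u)]$, and the middle hedgehog is $\mathcal{M}_K=\{m_K(u):u\in\mathbb{S}^1\}$. *)

theory Defs
  imports "HOL-Analysis.Analysis"
begin

type_synonym R2 = "real^2"

definition hausdorff_dist :: "R2 set \<Rightarrow> R2 set \<Rightarrow> real" where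
  "hausdorff_dist A B = max (SUP a\<in>A. infdist a B) (SUP b\<in>B. infdist b A)"

definition strictly_convex_body :: "R2 set \<Rightarrow> bool" where
  "strictly_convex_body K \<longleftrightarrow> K \<noteq> {} \<and> compact K \<and> convex K \<and>
     (\<forall>a b. a \<noteq> b \<longrightarrow> \<not> closed_segment a b \<subseteq> frontier K)"

definition supp_point :: "R2 set \<Rightarrow> R2 \<Rightarrow> R2" where
  "supp_point K u = (THE x. x \<in> K \<and> (\<forall>y\<in>K. y \<bullet> u \<le> x \<bullet> u))"

definition mid_point_fn :: "R2 set \<Rightarrow> R2 \<Rightarrow> R2" where
  "mid_point_fn K u = (1/2) *\<^sub>R (supp_point K u + supp_point K (- u))"

definition middle_hedgehog :: "R2 set \<Rightarrow> R2 set" where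
  "middle_hedgehog K = mid_point_fn K ` sphere 0 1"

definition exposed_points :: "R2 set \<Rightarrow> R2 set" where
  "exposed_points C = {p. {p} exposed_face_of C}"

definition A_set :: "nat \<Rightarrow> R2 set set" where
  "A_set k = {K. strictly_convex_body K \<and>
      finite (exposed_points (convex hull (middle_hedgehog K))) \<and>
      card (exposed_points (convex hull (middle_hedgehog K))) \<le> k}"

end

theory Submission
  imports Defs
begin

lemma scb_basic: "strictly_convex_body K \<Longrightarrow> K \<noteq> {} \<and> compact K \<and> convex K"
  by (simp add: strictly_convex_body_def)

lemma max_in_frontier:
  fixes K :: "R2 set"
  assumes "compact K" "x \<in> K" "u \<noteq> 0" "\<forall>y\<in>K. y \<bullet> u \<le> x \<bullet> u"
  shows "x \<in> frontier K"
proof -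
  have "x \<notin> interior K"
  proof
    assume "x \<in> interior K"
    then obtain e where e: "e > 0" "ball x e \<subseteq> K" by (meson mem_interior)
    define y where "y = x + (e / (2 * norm u)) *\<^sub>R u"
    have "dist x y < e" using e(1) assms(3) by (simp add: y_def dist_norm)
    hence "y \<in> K" using e by auto
    hence "y \<bullet> u \<le> x \<bullet> u" using assms(4) by auto
    moreover have "y \<bullet> u = x \<bullet> u + e / 2 * norm u"
      using assms(3) by (simp add: y_def inner_add_left power2_norm_eq_inner[symmetric] power2_eq_square)
    moreover have "e * norm u > 0" using e(1) assms(3) by simp
    ultimately show False by linarith
  qed
  then show ?thesis using assms(1,2) by (simp add: frontier_def compact_imp_closed)
qed

lemma supp_unique:
  assumes "strictly_convex_body K" "u \<noteq> 0" "x \<in> K" "z \<in> K"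
    "\<forall>y\<in>K. y \<bullet> u \<le> x \<bullet> u" "\<forall>y\<in>K. y \<bullet> u \<le> z \<bullet> u"
  shows "x = z"
proof (rule ccontr)
  assume ne: "x \<noteq> z"
  have K: "K \<noteq> {}" "compact K" "convex K" using scb_basic[OF assms(1)] by auto
  have eq: "x \<bullet> u = z \<bullet> u" using assms by force
  have "closed_segment x z \<subseteq> frontier K"
  proof
    fix w assume w: "w \<in> closed_segment x z"
    then obtain t where t: "0 \<le> t" "t \<le> 1" "w = (1 - t) *\<^sub>R x + t *\<^sub>R z"
      by (auto simp: closed_segment_def)
    have wK: "w \<in> K" using w K(3) assms(3,4) by (meson closed_segment_subset subsetD)
    have "w \<bullet> u = x \<bullet> u" unfolding t(3) using eq by (simp add: inner_add_left algebra_simps)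
    then show "w \<in> frontier K" using max_in_frontier[OF K(2) wK assms(2)] assms(5) by simp
  qed
  then show False using assms(1) ne by (auto simp: strictly_convex_body_def)
qed

lemma supp_point_prop:
  assumes "strictly_convex_body K" "u \<noteq> 0"
  shows "supp_point K u \<in> K \<and> (\<forall>y\<in>K. y \<bullet> u \<le> supp_point K u \<bullet> u)"
proof -
  have K: "K \<noteq> {}" "compact K" "convex K" using scb_basic[OF assms(1)] by auto
  have "continuous_on K (\<lambda>y. y \<bullet> u)" by (intro continuous_intros)
  then obtain x where x: "x \<in> K" "\<forall>y\<in>K. y \<bullet> u \<le> x \<bullet> u"
    using continuous_attains_sup[OF K(2) K(1), of "\<lambda>y. y \<bullet> u"] by blast
  have "supp_point K u = x" unfolding supp_point_def
    apply (rule the_equality) using x supp_unique[OF assms] by auto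
  then show ?thesis using x by simp
qed

lemma supp_point_eq:
  assumes "strictly_convex_body K" "u \<noteq> 0" "x \<in> K" "\<forall>y\<in>K. y \<bullet> u \<le> x \<bullet> u"
  shows "supp_point K u = x"
  using supp_point_prop[OF assms(1,2)] supp_unique[OF assms(1,2)] assms(3,4) by metis

lemma hd_close:
  fixes K L :: "R2 set"
  assumes "K \<noteq> {}" "compact K" "L \<noteq> {}" "compact L" "hausdorff_dist K L < d"
  shows "(\<forall>y\<in>L. \<exists>x\<in>K. dist y x < d) \<and> (\<forall>x\<in>K. \<exists>y\<in>L. dist x y < d)"
proof -
  have b1: "bdd_above ((\<lambda>b. infdist b K) ` L)"
    apply (rule bounded_imp_bdd_above, rule compact_imp_bounded, rule compact_continuous_image)
    using assms by (auto intro: continuous_on_infdist continuous_on_id)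
  have b2: "bdd_above ((\<lambda>b. infdist b L) ` K)"
    apply (rule bounded_imp_bdd_above, rule compact_imp_bounded, rule compact_continuous_image)
    using assms by (auto intro: continuous_on_infdist continuous_on_id)
  have 1: "infdist y K < d" if "y \<in> L" for y
  proof -
    have "infdist y K \<le> (SUP b\<in>L. infdist b K)" using cSUP_upper[OF that b1] .
    also have "\<dots> \<le> hausdorff_dist K L" by (simp add: hausdorff_dist_def)
    finally show ?thesis using assms(5) by simp
  qed
  have 2: "infdist x L < d" if "x \<in> K" for x
  proof -
    have "infdist x L \<le> (SUP b\<in>K. infdist b L)" using cSUP_upper[OF that b2] .
    also have "\<dots> \<le> hausdorff_dist K L" by (simp add: hausdorff_dist_def)
    finally show ?thesis using assms(5) by simp
  qed
  show ?thesis
  proof safe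
    fix y assume "y \<in> L"
    then show "\<exists>x\<in>K. dist y x < d" using 1 infdist_attains_inf[OF compact_imp_closed[OF assms(2)] assms(1), of y]
      by metis
  next
    fix x assume "x \<in> K"
    then show "\<exists>y\<in>L. dist x y < d" using 2 infdist_attains_inf[OF compact_imp_closed[OF assms(4)] assms(3), of x]
      by metis
  qed
qed

lemma bound_K: "compact (K::R2 set) \<Longrightarrow> \<exists>B>0. \<forall>x\<in>K. norm x \<le> B"
  by (meson bounded_pos compact_imp_bounded)

lemma inner_diff_bound:
  fixes x u u' :: R2
  assumes "norm x \<le> B"
  shows "\<bar>x \<bullet> u - x \<bullet> u'\<bar> \<le> B * norm (u - u')"
proof -
  have "\<bar>x \<bullet> u - x \<bullet> u'\<bar> = \<bar>x \<bullet> (u - u')\<bar>" by (simp add: inner_diff_right)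
  also have "\<dots> \<le> norm x * norm (u - u')" by (rule Cauchy_Schwarz_ineq2)
  also have "\<dots> \<le> B * norm (u - u')" using assms by (simp add: mult_right_mono)
  finally show ?thesis .
qed

lemma h_lip:
  assumes "strictly_convex_body K" "\<forall>x\<in>K. norm x \<le> B" "u \<noteq> 0" "u' \<noteq> 0"
  shows "supp_point K u' \<bullet> u' - B * norm (u - u') \<le> supp_point K u \<bullet> u"
proof -
  let ?x = "supp_point K u'"
  have x: "?x \<in> K" using supp_point_prop[OF assms(1,4)] by blast
  have "?x \<bullet> u \<le> supp_point K u \<bullet> u" using supp_point_prop[OF assms(1,3)] x by blast
  moreover have "\<bar>?x \<bullet> u - ?x \<bullet> u'\<bar> \<le> B * norm (u - u')"
    using inner_diff_bound assms(2) x by blast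
  ultimately show ?thesis by linarith
qed

lemma h_cont:
  assumes "strictly_convex_body K"
  shows "continuous_on (sphere 0 1) (\<lambda>u. supp_point K u \<bullet> u)"
proof -
  obtain B where B: "B > 0" "\<forall>x\<in>K. norm x \<le> B" using bound_K scb_basic[OF assms] by blast
  show ?thesis unfolding continuous_on_iff
  proof (intro ballI allI impI)
    fix u e assume u: "u \<in> sphere (0::R2) 1" and e: "(0::real) < e"
    show "\<exists>d>0. \<forall>u'\<in>sphere 0 1. dist u' u < d \<longrightarrow> dist (supp_point K u' \<bullet> u') (supp_point K u \<bullet> u) < e"
    proof (intro exI[of _ "e / B"] conjI ballI impI)
      show "0 < e / B" using e B by simp
      fix u' assume u': "u' \<in> sphere (0::R2) 1" and d: "dist u' u < e / B"
      have n: "u \<noteq> 0" "u' \<noteq> 0" using u u' by auto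
      have "B * norm (u - u') < e" using d B by (simp add: dist_norm norm_minus_commute field_simps)
      moreover have "B * norm (u' - u) = B * norm (u - u')" by (simp add: norm_minus_commute)
      ultimately have "supp_point K u' \<bullet> u' - supp_point K u \<bullet> u < e" "supp_point K u \<bullet> u - supp_point K u' \<bullet> u' < e"
        using h_lip[OF assms B(2) n] h_lip[OF assms B(2) n(2,1)] by linarith+
      then show "dist (supp_point K u' \<bullet> u') (supp_point K u \<bullet> u) < e"
        by (simp add: dist_real_def abs_less_iff)
    qed
  qed
qed

lemma supp_approx:
  assumes "strictly_convex_body K" "\<epsilon> > 0"
  shows "\<exists>\<eta>>0. \<forall>u\<in>sphere 0 1. \<forall>x\<in>K. x \<bullet> u \<ge> supp_point K u \<bullet> u - \<eta> \<longrightarrow> dist x (supp_point K u) < \<epsilon>"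
proof -
  have K: "K \<noteq> {}" "compact K" "convex K" using scb_basic[OF assms(1)] by auto
  define S :: "(R2 \<times> R2 \<times> R2) set" where
    "S = (sphere 0 1 \<times> (K \<times> K)) \<inter> {p. \<epsilon> \<le> dist (fst (snd p)) (snd (snd p))}"
  define f :: "R2 \<times> R2 \<times> R2 \<Rightarrow> real" where
    "f p = min (fst (snd p) \<bullet> fst p) (snd (snd p) \<bullet> fst p) - supp_point K (fst p) \<bullet> fst p" for p
  have cS: "compact S" unfolding S_def
    apply (rule compact_Int_closed)
     apply (intro compact_Times compact_sphere K(2))
    apply (rule closed_Collect_le) by (intro continuous_intros)+
  have hc: "continuous_on S (\<lambda>p. supp_point K (fst p) \<bullet> fst p)"
    apply (rule continuous_on_compose2[OF h_cont[OF assms(1)], of _ fst])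
     apply (intro continuous_intros) by (auto simp: S_def)
  have cf: "continuous_on S f" unfolding f_def
    by (intro continuous_intros hc)
  have neg: "f p < 0" if "p \<in> S" for p
  proof (rule ccontr)
    assume "\<not> f p < 0"
    obtain u x z where p: "p = (u, x, z)" by (cases p) auto
    have u: "u \<noteq> 0" "u \<in> sphere 0 1" and xz: "x \<in> K" "z \<in> K" "\<epsilon> \<le> dist x z"
      using that by (auto simp: S_def p)
    have sp: "supp_point K u \<in> K" "\<forall>y\<in>K. y \<bullet> u \<le> supp_point K u \<bullet> u"
      using supp_point_prop[OF assms(1) u(1)] by auto
    have "x \<bullet> u \<ge> supp_point K u \<bullet> u" "z \<bullet> u \<ge> supp_point K u \<bullet> u"
      using \<open>\<not> f p < 0\<close> by (auto simp: f_def p)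
    then have "\<forall>y\<in>K. y \<bullet> u \<le> x \<bullet> u" "\<forall>y\<in>K. y \<bullet> u \<le> z \<bullet> u" using sp by force+
    then have "x = z" using supp_unique[OF assms(1) u(1) xz(1,2)] by blast
    then show False using xz(3) assms(2) by simp
  qed
  obtain m where m: "m < 0" "\<forall>p\<in>S. f p \<le> m"
  proof (cases "S = {}")
    case True then show ?thesis using that[of "-1"] by simp
  next
    case False
    then obtain p where "p \<in> S" "\<forall>q\<in>S. f q \<le> f p" using continuous_attains_sup[OF cS False cf] by blast
    then show ?thesis using that[of "f p"] neg by blast
  qed
  show ?thesis
  proof (intro exI[of _ "- m / 2"] conjI ballI impI)
    show "0 < - m / 2" using m by simp
    fix u x assume u: "u \<in> sphere (0::R2) 1" and x: "x \<in> K" and ge: "supp_point K u \<bullet> u - - m / 2 \<le> x \<bullet> u"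
    have u0: "u \<noteq> 0" using u by auto
    have sp: "supp_point K u \<in> K" using supp_point_prop[OF assms(1) u0] by auto
    show "dist x (supp_point K u) < \<epsilon>"
    proof (rule ccontr)
      assume "\<not> dist x (supp_point K u) < \<epsilon>"
      then have "(u, x, supp_point K u) \<in> S" using u x sp by (auto simp: S_def)
      then have "f (u, x, supp_point K u) \<le> m" using m by blast
      then show False using ge m(1) by (auto simp: f_def)
    qed
  qed
qed

lemma inner_dist_bound:
  fixes x y u :: R2
  assumes "norm u = 1"
  shows "\<bar>x \<bullet> u - y \<bullet> u\<bar> \<le> dist x y"
proof -
  have "\<bar>x \<bullet> u - y \<bullet> u\<bar> = \<bar>(x - y) \<bullet> u\<bar>" by (simp add: inner_diff_left)
  also have "\<dots> \<le> norm (x - y) * norm u" by (rule Cauchy_Schwarz_ineq2)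
  finally show ?thesis using assms by (simp add: dist_norm)
qed

lemma supp_cont_hd:
  assumes "strictly_convex_body K" "\<epsilon> > 0"
  shows "\<exists>d>0. \<forall>L. strictly_convex_body L \<and> hausdorff_dist K L < d \<longrightarrow>
           (\<forall>u\<in>sphere 0 1. dist (supp_point L u) (supp_point K u) < \<epsilon>)"
proof -
  obtain \<eta> where eta: "\<eta> > 0" "\<forall>u\<in>sphere 0 1. \<forall>x\<in>K. x \<bullet> u \<ge> supp_point K u \<bullet> u - \<eta> \<longrightarrow> dist x (supp_point K u) < \<epsilon>/2"
    using supp_approx[OF assms(1), of "\<epsilon>/2"] assms(2) by auto
  have K: "K \<noteq> {}" "compact K" using scb_basic[OF assms(1)] by auto
  show ?thesis
  proof (intro exI[of _ "min (\<eta>/2) (\<epsilon>/2)"] conjI allI impI ballI)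
    show "0 < min (\<eta>/2) (\<epsilon>/2)" using eta assms by simp
    fix L u assume L: "strictly_convex_body L \<and> hausdorff_dist K L < min (\<eta>/2) (\<epsilon>/2)"
      and u: "u \<in> sphere (0::R2) 1"
    define d where "d = min (\<eta>/2) (\<epsilon>/2)"
    have L': "L \<noteq> {}" "compact L" using scb_basic L by auto
    have hdL: "hausdorff_dist K L < d" using L by (simp add: d_def)
    have cl: "(\<forall>y\<in>L. \<exists>x\<in>K. dist y x < d) \<and> (\<forall>x\<in>K. \<exists>y\<in>L. dist x y < d)"
      using hd_close[OF K L' hdL] .
    have u0: "u \<noteq> 0" and nu: "norm u = 1" using u by auto
    have spK: "supp_point K u \<in> K" using supp_point_prop[OF assms(1) u0] by blast
    have spL: "supp_point L u \<in> L" "\<forall>y\<in>L. y \<bullet> u \<le> supp_point L u \<bullet> u"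
      using supp_point_prop[OF _ u0, of L] L by auto
    obtain x where x: "x \<in> K" "dist (supp_point L u) x < d" using cl spL(1) by blast
    obtain x' where x': "x' \<in> L" "dist (supp_point K u) x' < d" using cl spK by blast
    have "x' \<bullet> u \<le> supp_point L u \<bullet> u" using spL(2) x'(1) by blast
    moreover have "\<bar>supp_point K u \<bullet> u - x' \<bullet> u\<bar> < d" using inner_dist_bound[OF nu, of "supp_point K u" x'] x'(2) by linarith
    moreover have "\<bar>supp_point L u \<bullet> u - x \<bullet> u\<bar> < d" using inner_dist_bound[OF nu, of "supp_point L u" x] x(2) by linarith
    moreover have "d \<le> \<eta>/2" by (simp add: d_def)
    ultimately have "x \<bullet> u \<ge> supp_point K u \<bullet> u - \<eta>" by (simp add: abs_less_iff)
    then have "dist x (supp_point K u) < \<epsilon>/2" by (rule eta(2)[rule_format, OF u x(1)])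
    then have "dist (supp_point L u) (supp_point K u) < d + \<epsilon>/2"
      using x(2) dist_triangle[of "supp_point L u" "supp_point K u" x] by linarith
    moreover have "d \<le> \<epsilon>/2" by (simp add: d_def)
    ultimately show "dist (supp_point L u) (supp_point K u) < \<epsilon>" by linarith
  qed
qed

lemma supp_cont_u:
  assumes "strictly_convex_body K"
  shows "continuous_on (sphere 0 1) (supp_point K)"
proof -
  obtain B where B: "B > 0" "\<forall>x\<in>K. norm x \<le> B" using bound_K scb_basic[OF assms] by blast
  show ?thesis unfolding continuous_on_iff
  proof (intro ballI allI impI)
    fix u e assume u: "u \<in> sphere (0::R2) 1" and e: "(0::real) < e"
    obtain \<eta> where eta: "\<eta> > 0" "\<forall>u\<in>sphere 0 1. \<forall>x\<in>K. x \<bullet> u \<ge> supp_point K u \<bullet> u - \<eta> \<longrightarrow> dist x (supp_point K u) < e"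
      using supp_approx[OF assms(1) e] by auto
    show "\<exists>d>0. \<forall>u'\<in>sphere 0 1. dist u' u < d \<longrightarrow> dist (supp_point K u') (supp_point K u) < e"
    proof (intro exI[of _ "\<eta> / (2*B)"] conjI ballI impI)
      show "0 < \<eta> / (2*B)" using eta B by simp
      fix u' assume u': "u' \<in> sphere (0::R2) 1" and d: "dist u' u < \<eta> / (2*B)"
      have n: "u \<noteq> 0" "u' \<noteq> 0" using u u' by auto
      have x: "supp_point K u' \<in> K" "\<forall>y\<in>K. y \<bullet> u' \<le> supp_point K u' \<bullet> u'"
        using supp_point_prop[OF assms n(2)] by auto
      have xu: "supp_point K u \<in> K" using supp_point_prop[OF assms n(1)] by auto
      have Bd: "B * norm (u' - u) < \<eta>/2" using d B by (simp add: dist_norm field_simps)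
      have a1: "\<bar>supp_point K u' \<bullet> u - supp_point K u' \<bullet> u'\<bar> \<le> B * norm (u - u')"
        using inner_diff_bound B(2) x(1) by blast
      have a2: "\<bar>supp_point K u \<bullet> u' - supp_point K u \<bullet> u\<bar> \<le> B * norm (u' - u)"
        using inner_diff_bound B(2) xu by blast
      have i3: "supp_point K u \<bullet> u' \<le> supp_point K u' \<bullet> u'" using x(2) xu by blast
      have nn: "norm (u - u') = norm (u' - u)" by (simp add: norm_minus_commute)
      have i1: "- (supp_point K u' \<bullet> u - supp_point K u' \<bullet> u') \<le> B * norm (u' - u)"
        using abs_le_D2[OF a1[unfolded nn]] .
      have i2: "- (supp_point K u \<bullet> u' - supp_point K u \<bullet> u) \<le> B * norm (u' - u)"
        using abs_le_D2[OF a2] .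
      have "supp_point K u' \<bullet> u \<ge> supp_point K u \<bullet> u - \<eta>" using i1 i2 i3 Bd by linarith
      then show "dist (supp_point K u') (supp_point K u) < e" by (rule eta(2)[rule_format, OF u x(1)])
    qed
  qed
qed

lemma mid_cont:
  assumes "strictly_convex_body K"
  shows "continuous_on (sphere 0 1) (mid_point_fn K)"
proof -
  have c1: "continuous_on (sphere 0 1) (\<lambda>u. supp_point K (- u))"
    apply (rule continuous_on_compose2[OF supp_cont_u[OF assms]])
     apply (intro continuous_intros) by auto
  show ?thesis unfolding mid_point_fn_def[abs_def]
    by (intro continuous_intros supp_cont_u[OF assms] c1)
qed

lemma hedgehog_compact:
  assumes "strictly_convex_body K"
  shows "compact (middle_hedgehog K)" "middle_hedgehog K \<noteq> {}"
proof -
  show "compact (middle_hedgehog K)" unfolding middle_hedgehog_def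
    by (rule compact_continuous_image[OF mid_cont[OF assms] compact_sphere])
  have "sphere (0::R2) 1 \<noteq> {}" by simp
  then show "middle_hedgehog K \<noteq> {}" unfolding middle_hedgehog_def by blast
qed

lemma mid_cont_hd:
  assumes "strictly_convex_body K" "\<epsilon> > 0"
  shows "\<exists>d>0. \<forall>L. strictly_convex_body L \<and> hausdorff_dist K L < d \<longrightarrow>
           (\<forall>u\<in>sphere 0 1. dist (mid_point_fn L u) (mid_point_fn K u) < \<epsilon>)"
proof -
  obtain d where d: "d > 0" "\<forall>L. strictly_convex_body L \<and> hausdorff_dist K L < d \<longrightarrow>
           (\<forall>u\<in>sphere 0 1. dist (supp_point L u) (supp_point K u) < \<epsilon>)"
    using supp_cont_hd[OF assms] by blast
  show ?thesis
  proof (intro exI[of _ d] conjI allI impI ballI)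
    show "d > 0" by fact
    fix L u assume L: "strictly_convex_body L \<and> hausdorff_dist K L < d" and u: "u \<in> sphere (0::R2) 1"
    have "-u \<in> sphere 0 1" using u by simp
    then have a: "dist (supp_point L u) (supp_point K u) < \<epsilon>" "dist (supp_point L (-u)) (supp_point K (-u)) < \<epsilon>"
      using d(2) L u by blast+
    have "mid_point_fn L u - mid_point_fn K u
        = (1/2) *\<^sub>R ((supp_point L u - supp_point K u) + (supp_point L (-u) - supp_point K (-u)))"
      unfolding mid_point_fn_def scaleR_diff_right[symmetric]
      by (rule arg_cong[where f="scaleR (1/2)"]) (simp add: algebra_simps)
    then have "dist (mid_point_fn L u) (mid_point_fn K u)
        = norm ((supp_point L u - supp_point K u) + (supp_point L (-u) - supp_point K (-u))) / 2"
      by (simp add: dist_norm)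
    also have "\<dots> \<le> (dist (supp_point L u) (supp_point K u) + dist (supp_point L (-u)) (supp_point K (-u))) / 2"
      by (simp add: dist_norm norm_triangle_ineq divide_right_mono)
    also have "\<dots> < \<epsilon>" using a by simp
    finally show "dist (mid_point_fn L u) (mid_point_fn K u) < \<epsilon>" .
  qed
qed

lemma farthest_exposed:
  fixes S :: "R2 set"
  assumes "q \<in> S" "\<forall>x\<in>S. dist x c \<le> dist q c"
  shows "q \<in> exposed_points (convex hull S)"
proof -
  define r where "r = dist q c"
  define a where "a = q - c"
  define H where "H = convex hull S"
  have Hc: "H \<subseteq> cball c r" unfolding H_def
  proof (rule hull_minimal)
    show "S \<subseteq> cball c r"
    proof
      fix x assume "x \<in> S"
      then have "dist x c \<le> r" using assms(2) unfolding r_def by blast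
      then show "x \<in> cball c r" by (simp add: mem_cball dist_commute)
    qed
  qed (rule convex_cball)
  have qH: "q \<in> H" using assms(1) hull_subset[of S convex] unfolding H_def by (simp add: subset_iff)
  have ar: "a \<bullet> a = r^2" by (simp add: a_def r_def dist_norm power2_norm_eq_inner)
  have r0: "r \<ge> 0" by (simp add: r_def)
  have le: "a \<bullet> x \<le> a \<bullet> q" if "x \<in> H" for x
  proof -
    have nx: "norm (x - c) \<le> r" using Hc that unfolding subset_iff mem_cball by (metis dist_commute dist_norm)
    have "a \<bullet> (x - c) \<le> norm a * norm (x - c)" by (rule norm_cauchy_schwarz)
    also have "\<dots> \<le> r * r" using nx r0 by (simp add: a_def r_def dist_norm mult_left_mono)
    finally have "a \<bullet> (x - c) \<le> r * r" .
    moreover have "a \<bullet> (q - c) = r * r" using ar by (simp add: a_def power2_eq_square)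
    ultimately show ?thesis by (simp add: inner_diff_right)
  qed
  have ex: "(H \<inter> {x. a \<bullet> x = a \<bullet> q}) exposed_face_of H"
    by (rule exposed_face_of_Int_supporting_hyperplane_le) (use le in \<open>auto simp: H_def\<close>)
  have "H \<inter> {x. a \<bullet> x = a \<bullet> q} = {q}"
  proof safe
    fix x assume x: "x \<in> H" "a \<bullet> x = a \<bullet> q"
    have nx: "norm (x - c) \<le> r" using Hc x(1) unfolding subset_iff mem_cball by (metis dist_commute dist_norm)
    have nx2: "(x - c) \<bullet> (x - c) \<le> r^2" using nx
      by (metis norm_ge_zero power2_norm_eq_inner power_mono)
    have xa: "(x - c) \<bullet> a = r^2" using x(2) ar by (simp add: a_def inner_diff_left inner_diff_right inner_commute)
    have "(x - q) \<bullet> (x - q) = (x - c) \<bullet> (x - c) - 2 * ((x - c) \<bullet> a) + a \<bullet> a"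
      by (simp add: a_def inner_diff_left inner_diff_right inner_commute algebra_simps)
    also have "\<dots> \<le> 0" using nx2 xa ar by simp
    finally have "(x - q) \<bullet> (x - q) \<le> 0" .
    then have "(x - q) \<bullet> (x - q) = 0" using inner_ge_zero[of "x - q"] by linarith
    then show "x = q" by simp
  qed (use qH in auto)
  then show ?thesis using ex by (simp add: exposed_points_def H_def)
qed

lemma arith_contra:
  fixes r0 \<eta> y :: real
  assumes "r0 \<ge> 0" "\<eta> > 0" "\<eta> * (4 * r0 + 4) \<le> 1" "y \<ge> 0" "y > r0 - 2 * \<eta>" "y^2 \<le> r0^2 - 1"
  shows False
proof (cases "r0 \<le> 2 * \<eta>")
  case True
  have "\<eta> * 4 \<le> \<eta> * (4 * r0 + 4)" using assms(1,2) by (intro mult_left_mono) auto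
  then have "\<eta> \<le> 1/4" using assms(3) by linarith
  then have "r0 \<le> 1/2" using True by simp
  then have "r0^2 \<le> (1/2)^2" using assms(1) power_mono by blast
  then have "r0^2 \<le> 1/4" by (simp add: power_divide)
  moreover have "y^2 \<ge> 0" by simp
  ultimately show False using assms(6) by linarith
next
  case False
  have "(r0 - 2*\<eta>)^2 < y^2" using False assms(5) by (simp add: power_strict_mono)
  moreover have "(r0 - 2*\<eta>)^2 = r0^2 - 4*\<eta>*r0 + 4*\<eta>^2" by (simp add: power2_eq_square algebra_simps)
  moreover have "4*\<eta>*r0 < 1" using assms(2,3) by (simp add: algebra_simps)
  moreover have "\<eta>^2 \<ge> 0" by simp
  ultimately show False using assms(6) by linarith
qed

lemma key:
  assumes K: "strictly_convex_body K"
    and pE: "p \<in> exposed_points (convex hull (middle_hedgehog K))" and dpos: "\<delta> > 0"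
  shows "\<exists>\<eta>>0. \<forall>L. strictly_convex_body L \<and> (\<forall>u\<in>sphere 0 1. dist (mid_point_fn L u) (mid_point_fn K u) < \<eta>)
          \<longrightarrow> (\<exists>q\<in>exposed_points (convex hull (middle_hedgehog L)). dist q p < 2 * \<delta>)"
proof -
  define M where "M = middle_hedgehog K"
  define C where "C = convex hull M"
  have exf: "{p} exposed_face_of C" using pE by (simp add: exposed_points_def C_def M_def)
  then obtain a b where ab: "C \<subseteq> {x. a \<bullet> x \<le> b}" "{p} = C \<inter> {x. a \<bullet> x = b}"
    unfolding exposed_face_of_def by blast
  have "{p} face_of C" using exf unfolding exposed_face_of_def by (rule conjunct1)
  then have "p extreme_point_of C" by (simp only: face_of_singleton)
  then have pM: "p \<in> M" unfolding C_def by (rule extreme_point_of_convex_hull)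
  then obtain u0 where u0: "u0 \<in> sphere 0 1" "p = mid_point_fn K u0" unfolding M_def middle_hedgehog_def by blast
  have MC: "M \<subseteq> C" unfolding C_def by (rule hull_subset)
  have ap: "a \<bullet> p = b" using ab(2) by blast
  have strict: "a \<bullet> x < b" if "x \<in> M" "x \<noteq> p" for x
  proof -
    have "x \<in> C" using that MC by blast
    then have "a \<bullet> x \<le> b" "a \<bullet> x \<noteq> b" using ab that(2) by blast+
    then show ?thesis by simp
  qed
  have cM: "compact M" unfolding M_def using hedgehog_compact[OF K] by blast
  obtain \<beta> where beta: "\<beta> > 0" "\<forall>x\<in>M. \<delta> \<le> dist x p \<longrightarrow> a \<bullet> x \<le> b - \<beta>"
  proof -
    define T where "T = M \<inter> {x. \<delta> \<le> dist x p}"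
    have cT: "compact T" unfolding T_def
      by (rule compact_Int_closed[OF cM], rule closed_Collect_le) (intro continuous_intros)+
    show ?thesis
    proof (cases "T = {}")
      case True then show ?thesis using that[of 1] by (auto simp: T_def)
    next
      case False
      have "continuous_on T (\<lambda>x. a \<bullet> x)" by (intro continuous_intros)
      then obtain x1 where x1: "x1 \<in> T" "\<forall>y\<in>T. a \<bullet> y \<le> a \<bullet> x1"
        using continuous_attains_sup[OF cT False] by blast
      have "x1 \<in> M" "x1 \<noteq> p" using x1(1) dpos by (auto simp: T_def)
      then have "a \<bullet> x1 < b" by (rule strict)
      then show ?thesis using that[of "b - a \<bullet> x1"] x1 by (auto simp: T_def)
    qed
  qed
  obtain B where B: "B > 0" "\<forall>x\<in>M. norm x \<le> B" using bound_K[OF cM] by blast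
  define D where "D = B + norm p"
  have Dp: "norm (x - p) \<le> D" if "x \<in> M" for x
    using B(2) that norm_triangle_ineq4[of x p] unfolding D_def by fastforce
  have D0: "D \<ge> 0" using B unfolding D_def by simp
  define R where "R = (D^2 + 1) / (2 * \<beta>)"
  define c where "c = p - R *\<^sub>R a"
  define r0 where "r0 = dist p c"
  have r0nn: "r0 \<ge> 0" by (simp add: r0_def)
  have r0sq: "r0^2 = R^2 * (a \<bullet> a)"
    by (simp add: r0_def c_def dist_norm power2_norm_eq_inner power_mult_distrib)
  have claim1: "(dist x c)^2 \<le> r0^2 - 1" if "x \<in> M" "\<delta> \<le> dist x p" for x
  proof -
    have xc: "x - c = (x - p) + R *\<^sub>R a" by (simp add: c_def)
    have e1: "(dist x c)^2 = (x - p) \<bullet> (x - p) + 2 * R * (a \<bullet> (x - p)) + R^2 * (a \<bullet> a)"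
      unfolding dist_norm power2_norm_eq_inner xc
      by (simp add: inner_add_left inner_add_right inner_commute power2_eq_square algebra_simps)
    have e2: "(x - p) \<bullet> (x - p) \<le> D^2"
      using power_mono[OF Dp[OF that(1)] norm_ge_zero, of 2] by (simp add: power2_norm_eq_inner)
    have "a \<bullet> x \<le> b - \<beta>" using beta(2) that by blast
    then have e3: "a \<bullet> (x - p) \<le> - \<beta>" unfolding inner_diff_right using ap by linarith
    have "0 < D^2 + 1" using zero_le_power2[of D] by linarith
    then have R0: "R > 0" using beta(1) unfolding R_def by (intro divide_pos_pos) auto
    have e4: "2 * R * \<beta> = D^2 + 1" using beta(1) by (simp add: R_def)
    have e5: "(2 * R) * (a \<bullet> (x - p)) \<le> (2 * R) * (- \<beta>)"
      using e3 R0 by (intro mult_left_mono) auto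
    show ?thesis using e1 e2 e4 e5 r0sq by linarith
  qed
  define \<eta> where "\<eta> = min \<delta> (1 / (4 * r0 + 4))"
  have eta0: "\<eta> > 0" using dpos r0nn by (simp add: \<eta>_def)
  have eta1: "\<eta> * (4 * r0 + 4) \<le> 1"
  proof -
    have "\<eta> \<le> 1 / (4 * r0 + 4)" by (simp add: \<eta>_def)
    then show ?thesis using r0nn by (simp add: field_simps)
  qed
  have etad: "\<eta> \<le> \<delta>" by (simp add: \<eta>_def)
  show ?thesis
  proof (intro exI[of _ \<eta>] conjI allI impI)
    show "\<eta> > 0" by fact
    fix L assume L: "strictly_convex_body L \<and> (\<forall>u\<in>sphere 0 1. dist (mid_point_fn L u) (mid_point_fn K u) < \<eta>)"
    define HL where "HL = middle_hedgehog L"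
    have cHL: "compact HL" "HL \<noteq> {}" unfolding HL_def using hedgehog_compact L by auto
    have "continuous_on HL (\<lambda>x. dist x c)" by (intro continuous_intros)
    then obtain q where q: "q \<in> HL" "\<forall>x\<in>HL. dist x c \<le> dist q c"
      using continuous_attains_sup[OF cHL] by blast
    then obtain u where u: "u \<in> sphere 0 1" "q = mid_point_fn L u" unfolding HL_def middle_hedgehog_def by blast
    have qE: "q \<in> exposed_points (convex hull HL)" using farthest_exposed q by blast
    have l0: "mid_point_fn L u0 \<in> HL" using u0 unfolding HL_def middle_hedgehog_def by blast
    have d0: "dist (mid_point_fn L u0) p < \<eta>" using L u0 by auto
    have du: "dist q (mid_point_fn K u) < \<eta>" using L u by auto
    have "dist p c \<le> dist (mid_point_fn L u0) c + dist (mid_point_fn L u0) p"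
      by (metis dist_commute dist_triangle)
    then have "r0 < dist q c + \<eta>" using q(2) l0 d0 unfolding r0_def by fastforce
    moreover have "dist q c \<le> dist (mid_point_fn K u) c + dist q (mid_point_fn K u)"
      by (metis dist_commute dist_triangle)
    ultimately have y: "dist (mid_point_fn K u) c > r0 - 2 * \<eta>" using du by linarith
    have mK: "mid_point_fn K u \<in> M" using u unfolding M_def middle_hedgehog_def by blast
    have "dist (mid_point_fn K u) p < \<delta>"
    proof (rule ccontr)
      assume "\<not> ?thesis"
      then have "(dist (mid_point_fn K u) c)^2 \<le> r0^2 - 1" using claim1 mK by simp
      then show False using arith_contra[OF r0nn eta0 eta1 _ y] by simp
    qed
    then have "dist q p < 2 * \<delta>" using du etad dist_triangle[of q p "mid_point_fn K u"] by linarith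
    then show "\<exists>q\<in>exposed_points (convex hull (middle_hedgehog L)). dist q p < 2 * \<delta>"
      using qE unfolding HL_def by blast
  qed
qed

lemma sep_exists:
  fixes P :: "R2 set"
  assumes "finite P"
  shows "\<exists>\<delta>>0. \<forall>p\<in>P. \<forall>q\<in>P. p \<noteq> q \<longrightarrow> 4 * \<delta> \<le> dist p q"
proof -
  define D where "D = (\<lambda>pq. dist (fst pq) (snd pq)) ` {pq\<in>P \<times> P. fst pq \<noteq> snd pq}"
  have fD: "finite D" unfolding D_def using assms by simp
  show ?thesis
  proof (cases "D = {}")
    case True
    then show ?thesis by (intro exI[of _ 1]) (auto simp: D_def)
  next
    case False
    have pos: "Min D > 0"
    proof -
      have "Min D \<in> D" using Min_in[OF fD False] .
      then show ?thesis by (auto simp: D_def)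
    qed
    show ?thesis
    proof (intro exI[of _ "Min D / 4"] conjI ballI impI)
      show "0 < Min D / 4" using pos by simp
      fix p q assume "p \<in> P" "q \<in> P" "p \<noteq> q"
      then have "dist p q \<in> D" unfolding D_def by (auto intro!: image_eqI[of _ _ "(p, q)"])
      then have "Min D \<le> dist p q" using Min_le[OF fD] by blast
      then show "4 * (Min D / 4) \<le> dist p q" by simp
    qed
  qed
qed

theorem lemma2:
  fixes k :: nat
  shows "\<forall>K. strictly_convex_body K \<and> K \<notin> A_set k \<longrightarrow>
           (\<exists>e>0. \<forall>L. strictly_convex_body L \<and> hausdorff_dist K L < e \<longrightarrow> L \<notin> A_set k)"
proof (intro allI impI)
  fix K assume asm: "strictly_convex_body K \<and> K \<notin> A_set k"
  then have K: "strictly_convex_body K" by blast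
  define E where "E = exposed_points (convex hull (middle_hedgehog K))"
  have nE: "\<not> (finite E \<and> card E \<le> k)" using asm by (simp add: A_set_def E_def)
  obtain P where P: "P \<subseteq> E" "finite P" "card P = Suc k"
  proof (cases "finite E")
    case True
    then have "Suc k \<le> card E" using nE by simp
    then show ?thesis using obtain_subset_with_card_n that by metis
  next
    case False
    then show ?thesis using infinite_arbitrarily_large[OF False, of "Suc k"] that by blast
  qed
  have Pne: "P \<noteq> {}" using P(3) by auto
  obtain \<delta> where dl: "\<delta> > 0" "\<forall>p\<in>P. \<forall>q\<in>P. p \<noteq> q \<longrightarrow> 4 * \<delta> \<le> dist p q"
    using sep_exists[OF P(2)] by blast
  have "\<forall>p\<in>P. \<exists>\<eta>>0. \<forall>L. strictly_convex_body L \<and> (\<forall>u\<in>sphere 0 1. dist (mid_point_fn L u) (mid_point_fn K u) < \<eta>)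
          \<longrightarrow> (\<exists>q\<in>exposed_points (convex hull (middle_hedgehog L)). dist q p < 2 * \<delta>)"
  proof
    fix p assume "p \<in> P"
    then have "p \<in> E" using P(1) by blast
    then show "\<exists>\<eta>>0. \<forall>L. strictly_convex_body L \<and> (\<forall>u\<in>sphere 0 1. dist (mid_point_fn L u) (mid_point_fn K u) < \<eta>)
          \<longrightarrow> (\<exists>q\<in>exposed_points (convex hull (middle_hedgehog L)). dist q p < 2 * \<delta>)"
      using key[OF K _ dl(1)] unfolding E_def by blast
  qed
  then obtain f where f: "\<forall>p\<in>P. f p > 0 \<and> (\<forall>L. strictly_convex_body L \<and> (\<forall>u\<in>sphere 0 1. dist (mid_point_fn L u) (mid_point_fn K u) < f p)
          \<longrightarrow> (\<exists>q\<in>exposed_points (convex hull (middle_hedgehog L)). dist q p < 2 * \<delta>))"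
    by (metis (no_types, lifting))
  define \<eta>0 where "\<eta>0 = Min (f ` P)"
  have fin: "finite (f ` P)" "f ` P \<noteq> {}" using P(2) Pne by auto
  have eta0: "\<eta>0 > 0"
  proof -
    have "\<eta>0 \<in> f ` P" unfolding \<eta>0_def using Min_in[OF fin] .
    then show ?thesis using f by auto
  qed
  have eta_le: "\<eta>0 \<le> f p" if "p \<in> P" for p
    unfolding \<eta>0_def using Min_le[OF fin(1)] that by blast
  obtain d where d: "d > 0" "\<forall>L. strictly_convex_body L \<and> hausdorff_dist K L < d \<longrightarrow>
           (\<forall>u\<in>sphere 0 1. dist (mid_point_fn L u) (mid_point_fn K u) < \<eta>0)"
    using mid_cont_hd[OF K eta0] by blast
  show "\<exists>e>0. \<forall>L. strictly_convex_body L \<and> hausdorff_dist K L < e \<longrightarrow> L \<notin> A_set k"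
  proof (intro exI[of _ d] conjI allI impI)
    show "d > 0" by fact
    fix L assume L: "strictly_convex_body L \<and> hausdorff_dist K L < d"
    define EL where "EL = exposed_points (convex hull (middle_hedgehog L))"
    have close: "\<forall>u\<in>sphere 0 1. dist (mid_point_fn L u) (mid_point_fn K u) < \<eta>0" using d(2) L by blast
    have "\<forall>p\<in>P. \<exists>q\<in>EL. dist q p < 2 * \<delta>"
    proof
      fix p assume p: "p \<in> P"
      have "\<forall>u\<in>sphere 0 1. dist (mid_point_fn L u) (mid_point_fn K u) < f p"
        using close eta_le[OF p] by fastforce
      then show "\<exists>q\<in>EL. dist q p < 2 * \<delta>" using f p L unfolding EL_def by blast
    qed
    then obtain g where g: "\<forall>p\<in>P. g p \<in> EL \<and> dist (g p) p < 2 * \<delta>" by metis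
    have inj: "inj_on g P"
    proof (rule inj_onI, rule ccontr)
      fix p q assume pq: "p \<in> P" "q \<in> P" "g p = g q" "p \<noteq> q"
      have "dist p q \<le> dist (g p) p + dist (g q) q"
        using dist_triangle[of p q "g p"] pq(3) by (simp add: dist_commute)
      moreover have "dist (g p) p < 2 * \<delta>" "dist (g q) q < 2 * \<delta>" using g pq by auto
      moreover have "4 * \<delta> \<le> dist p q" using dl(2) pq by blast
      ultimately show False by linarith
    qed
    have sub: "g ` P \<subseteq> EL" using g by blast
    show "L \<notin> A_set k"
    proof
      assume "L \<in> A_set k"
      then have "finite EL" "card EL \<le> k" by (simp_all add: A_set_def EL_def)
      then have "card (g ` P) \<le> k" using card_mono[OF _ sub] by linarith
      then show False using card_image[OF inj] P(3) by simp
    qed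
  qed
qed

end
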